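(* Consider the system $\dot{x} = f(x) + F(x)\hat{\theta} + g(x)u + F(x)\tilde{\theta}$, obtained from $\dot x=f(x)+F(x)\theta+g(x)u$ ($x\in\mathbb{R}^n$, $u\in\mathbb{R}^m$, constant unknown $\theta\in\mathbb{R}^p$, $f,F,g$ locally Lipschitz, $f(0)=0$, $F(0)=0$) with estimate $\hat\theta\in\mathbb{R}^p$ and estimation error $\tilde\theta=\theta-\hat\theta$. Suppose the estimate evolves by an update law $\dot{\hat\theta}=\tau(\hat\theta,t)$, $\tau$ locally Lipschitz in its first argument and piecewise continuous in its second, and there exist $V_\theta:\mathbb{R}^p\times\mathbb{R}_{\ge0}\to\mathbb{R}_{\ge0}$, continuously differentiable in both arguments, and constants $\eta_1,\eta_2,\eta_3>0$, $T\ge0$ with $\eta_1\|\tilde\theta\|^2\le V_\theta(\tilde\theta,t)\le\eta_2\|\tilde\theta\|^2$ and $\dot V_\theta(\tilde\theta,t)\le0$ for all $(\tilde\theta,t)\in\mathbb{R}^p\times\mathbb{R}_{\ge0}$, and $\dot V_\theta(\tilde\theta,t)\le-\eta_3\|\tilde\theta\|^2$ for all $(\tilde\theta,t)\in\mathbb{R}^p\times\mathbb{R}_{\ge T}$ (derivatives along $\dot{\tilde\theta}=-\tau(\theta-\tilde\theta,t)$). Let $h:\mathbb{R}^n\to\mathbb{R}$ have relative degree $r\in\mathbb{N}$ with respect to both $u$ and $\tilde\theta$ (Assumption in the context), and let $h$ be an ISSf-HOCBF on $\mathcal{C}_\delta$ with functions $\alpha_1,\dots,\alpha_r\in\mathcal{K}_\infty^e$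 and constant $\varepsilon>0$ (defined in the context). Let $k:\mathbb{R}^n\times\mathbb{R}^p\to\mathbb{R}^m$ be locally Lipschitz with $k(x,\hat\theta)\in K_h(x,\hat\theta)$ for all $(x,\hat\theta)\in\mathbb{R}^n\times\mathbb{R}^p$, where $$K_h(x,\hat\theta)=\Big\{u\in\mathbb{R}^m : L_f\psi_{r-1}(x)+L_F\psi_{r-1}(x)\hat\theta+L_g\psi_{r-1}(x)u\ge -\alpha_r(\psi_{r-1}(x))+\tfrac{\|L_F\psi_{r-1}(x)\|^2}{\varepsilon}\Big\},$$ and let $\delta\ge0$ be such that $\|\tilde\theta\|_\infty\le\delta$. Define $$\gamma_r(\delta)=-\alpha_r^{-1}\!\left(-\tfrac{\varepsilon\delta^2}{4}\right),\qquad \gamma_i(\delta)=-\alpha_i^{-1}(-\gamma_{i+1}(\delta)),\ i\in\{1,\dots,r-1\},$$ and $\mathcal{C}_\delta=\bigcap_{i=1}^r\{x\in\mathbb{R}^n:\psi_{i-1}(x)+\gamma_i(\delta)\ge0\}$. Then the control policy $u=k(x,\hat\theta)$ renders $\mathcal{C}_\delta$ forward invariant for the closed-loop system $\dot x=f(x)+F(x)\hat\theta+g(x)k(x,\hat\theta)+F(x)\tilde\theta$.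
   Context: For a differentiable $h$ and vector field $f$, $L_fh(x)=\nabla h(x)f(x)$; $L_gh$, $L_Fh$ are defined column-wise. $\mathcal{K}_\infty^e$: continuous strictly increasing $\alpha:\mathbb{R}\to\mathbb{R}$ with $\alpha(0)=0$, $\alpha(r)\to\pm\infty$ as $r\to\pm\infty$ (hence invertible). $h$ has relative degree $r$ with respect to $u$ on a domain $\mathcal{D}$ if $h$ is $r$-times differentiable, $L_gL_f^ih(x)=0$ for all $x\in\mathbb{R}^n$ and $i\in\{0,\dots,r-2\}$, and $L_gL_f^{r-1}h(x)\ne0$ for $x\in\mathcal{D}$; relative degree with respect to $\tilde\theta$ is defined identically with $g$ replaced by $F$. Assumption: $h$ has relative degree $r$ with respect to both $u$ and $\tilde\theta$ (so $u$, $\hat\theta$, $\tilde\theta$ first appear in the $r$-th derivative of $h$). Given sufficiently smooth $\alpha_1,\dots,\alpha_r\in\mathcal{K}_\infty^e$, define $\psi_0(x)=h(x)$ and $\psi_i(x)=\dot\psi_{i-1}(x)+\alpha_i(\psi_{i-1}(x))=L_f\psi_{i-1}(x)+\alpha_i(\psi_{i-1}(x))$ for $i\in\{1,\dots,r-1\}$. Let $\mathcal{C}^i=\{x:\psi_{i-1}(x)\ge0\}$, $i=1,\dots,r$. $h$ is an input-to-state safe high order control barrier function (ISSf-HOCBF) on $\mathcal{C}_\delta$ if $\nabla\psi_{i-1}(x)\neq0$ for all $x\in\partial\mathcal{C}^i$ and all $i\in\{1,\dots,r\}$, and there exist such $\alpha_i$ and $\varepsilon>0$ with $\sup_{u\in\mathbb{R}^m}\big(L_f\psi_{r-1}(x)+L_F\psi_{r-1}(x)\hat\theta+L_g\psi_{r-1}(x)u\big)>-\alpha_r(\psi_{r-1}(x))+\tfrac{\|L_F\psi_{r-1}(x)\|^2}{\varepsilon}$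 for all $x\in\mathbb{R}^n$, $\hat\theta\in\mathbb{R}^p$. $\|\tilde\theta\|_\infty=\sup_{t\ge0}\|\tilde\theta(t)\|$. A set is forward invariant if every closed-loop solution starting in it remains in it on its whole maximal interval of existence. *)

theory Defs
  imports "HOL-Analysis.Analysis"
begin

definition Lie :: "('a::real_normed_vector \<Rightarrow> 'a) \<Rightarrow> ('a \<Rightarrow> real) \<Rightarrow> 'a \<Rightarrow> real" where
  "Lie v phi x = frechet_derivative phi (at x) (v x)"

definition LieV :: "(real^'n \<Rightarrow> real^'q^'n) \<Rightarrow> (real^'n \<Rightarrow> real) \<Rightarrow> real^'n \<Rightarrow> real^'q" where
  "LieV G phi x = (\<chi> j. frechet_derivative phi (at x) (column j (G x)))"

fun Lie_iter :: "('a::real_normed_vector \<Rightarrow> 'a) \<Rightarrow> ('a \<Rightarrow> real) \<Rightarrow> nat \<Rightarrow> 'a \<Rightarrow> real" where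
  "Lie_iter v h 0 = h"
| "Lie_iter v h (Suc i) = Lie v (Lie_iter v h i)"

text \<open>Relative degree r of h with respect to the input channel G on the domain D.
  (h r-times differentiable is read as: the iterated Lie derivatives L_f^i h, i < r,
  which enter L_G L_f^i h, are differentiable.)\<close>
definition rel_deg :: "(real^'n \<Rightarrow> real^'n) \<Rightarrow> (real^'n \<Rightarrow> real^'q^'n) \<Rightarrow> (real^'n \<Rightarrow> real)
    \<Rightarrow> nat \<Rightarrow> (real^'n) set \<Rightarrow> bool" where
  "rel_deg f G h r D \<longleftrightarrow> 1 \<le> r
     \<and> (\<forall>i<r. \<forall>x. Lie_iter f h i differentiable (at x))
     \<and> (\<forall>i. i + 2 \<le> r \<longrightarrow> (\<forall>x. LieV G (Lie_iter f h i) x = 0))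
     \<and> (\<forall>x\<in>D. LieV G (Lie_iter f h (r - 1)) x \<noteq> 0)"

definition Kinf_e :: "(real \<Rightarrow> real) \<Rightarrow> bool" where
  "Kinf_e \<alpha> \<longleftrightarrow> continuous_on UNIV \<alpha> \<and> strict_mono \<alpha> \<and> \<alpha> 0 = 0
     \<and> filterlim \<alpha> at_top at_top \<and> filterlim \<alpha> at_bot at_bot"

definition smooth_real :: "(real \<Rightarrow> real) \<Rightarrow> bool" where
  "smooth_real \<alpha> \<longleftrightarrow> (\<forall>k x. ((deriv ^^ k) \<alpha>) differentiable (at x))"

fun psi :: "(real^'n \<Rightarrow> real^'n) \<Rightarrow> (nat \<Rightarrow> real \<Rightarrow> real) \<Rightarrow> (real^'n \<Rightarrow> real) \<Rightarrow> nat \<Rightarrow> real^'n \<Rightarrow> real" where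
  "psi f \<alpha> h 0 = h"
| "psi f \<alpha> h (Suc i) = (\<lambda>x. Lie f (psi f \<alpha> h i) x + \<alpha> (Suc i) (psi f \<alpha> h i x))"

definition ISSf_HOCBF :: "(real^'n \<Rightarrow> real^'n) \<Rightarrow> (real^'n \<Rightarrow> real^'p^'n) \<Rightarrow> (real^'n \<Rightarrow> real^'m^'n)
    \<Rightarrow> (real^'n \<Rightarrow> real) \<Rightarrow> nat \<Rightarrow> (nat \<Rightarrow> real \<Rightarrow> real) \<Rightarrow> real \<Rightarrow> bool" where
  "ISSf_HOCBF f F g h r \<alpha> \<epsilon> \<longleftrightarrow>
     (\<forall>i\<in>{1..r}. Kinf_e (\<alpha> i)) \<and> \<epsilon> > 0
     \<and> (\<forall>i\<in>{1..r}. \<forall>x \<in> frontier {y. psi f \<alpha> h (i - 1) y \<ge> 0}.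
           frechet_derivative (psi f \<alpha> h (i - 1)) (at x) \<noteq> (\<lambda>_. 0))
     \<and> (\<forall>x (th::real^'p).
          (SUP u::real^'m. ereal (Lie f (psi f \<alpha> h (r - 1)) x
                 + LieV F (psi f \<alpha> h (r - 1)) x \<bullet> th + LieV g (psi f \<alpha> h (r - 1)) x \<bullet> u))
          > ereal (- \<alpha> r (psi f \<alpha> h (r - 1) x) + (norm (LieV F (psi f \<alpha> h (r - 1)) x))\<^sup>2 / \<epsilon>))"

definition K_h :: "(real^'n \<Rightarrow> real^'n) \<Rightarrow> (real^'n \<Rightarrow> real^'p^'n) \<Rightarrow> (real^'n \<Rightarrow> real^'m^'n)
    \<Rightarrow> (real^'n \<Rightarrow> real) \<Rightarrow> nat \<Rightarrow> (nat \<Rightarrow> real \<Rightarrow> real) \<Rightarrow> real \<Rightarrow> real^'n \<Rightarrow> real^'p \<Rightarrow> (real^'m) set" where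
  "K_h f F g h r \<alpha> \<epsilon> x th = {u.
      Lie f (psi f \<alpha> h (r - 1)) x + LieV F (psi f \<alpha> h (r - 1)) x \<bullet> th + LieV g (psi f \<alpha> h (r - 1)) x \<bullet> u
      \<ge> - \<alpha> r (psi f \<alpha> h (r - 1) x) + (norm (LieV F (psi f \<alpha> h (r - 1)) x))\<^sup>2 / \<epsilon>}"

text \<open>gamma_aux k = gamma_(r-k): gamma_r(delta) = -alpha_r^-1(-eps delta^2/4),
  gamma_i(delta) = -alpha_i^-1(-gamma_(i+1)(delta)).\<close>
fun gamma_aux :: "(nat \<Rightarrow> real \<Rightarrow> real) \<Rightarrow> real \<Rightarrow> nat \<Rightarrow> real \<Rightarrow> nat \<Rightarrow> real" where
  "gamma_aux \<alpha> \<epsilon> r \<delta> 0 = - inv (\<alpha> r) (- (\<epsilon> * \<delta>\<^sup>2 / 4))"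
| "gamma_aux \<alpha> \<epsilon> r \<delta> (Suc k) = - inv (\<alpha> (r - Suc k)) (- gamma_aux \<alpha> \<epsilon> r \<delta> k)"

definition gamma :: "(nat \<Rightarrow> real \<Rightarrow> real) \<Rightarrow> real \<Rightarrow> nat \<Rightarrow> real \<Rightarrow> nat \<Rightarrow> real" where
  "gamma \<alpha> \<epsilon> r \<delta> i = gamma_aux \<alpha> \<epsilon> r \<delta> (r - i)"

definition C_delta :: "(real^'n \<Rightarrow> real^'n) \<Rightarrow> (nat \<Rightarrow> real \<Rightarrow> real) \<Rightarrow> (real^'n \<Rightarrow> real)
    \<Rightarrow> real \<Rightarrow> nat \<Rightarrow> real \<Rightarrow> (real^'n) set" where
  "C_delta f \<alpha> h \<epsilon> r \<delta> = (\<Inter>i\<in>{1..r}. {x. psi f \<alpha> h (i - 1) x + gamma \<alpha> \<epsilon> r \<delta> i \<ge> 0})"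

definition loc_lip :: "('a::metric_space \<Rightarrow> 'b::metric_space) \<Rightarrow> bool" where
  "loc_lip \<phi> \<longleftrightarrow> (\<forall>x. \<exists>u>0. \<exists>L. L-lipschitz_on (cball x u) \<phi>)"

definition pw_continuous :: "(real \<Rightarrow> 'a::topological_space) \<Rightarrow> bool" where
  "pw_continuous \<phi> \<longleftrightarrow> (\<forall>a b. 0 \<le> a \<longrightarrow> a \<le> b \<longrightarrow> (\<exists>S. finite S \<and> continuous_on ({a..b} - S) \<phi>
      \<and> (\<forall>s\<in>S. (\<exists>l. (\<phi> \<longlongrightarrow> l) (at_left s)) \<and> (\<exists>l. (\<phi> \<longlongrightarrow> l) (at_right s)))))"

end

theory Submission
  imports Defs
begin

inductive_set Gen :: "(real^'n \<Rightarrow> real^'n) \<Rightarrow> (real^'n \<Rightarrow> real) \<Rightarrow> nat \<Rightarrow> (real^'n \<Rightarrow> real) set"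
  for f :: "real^'n \<Rightarrow> real^'n" and h :: "real^'n \<Rightarrow> real" and i :: nat where
  G_base: "j \<le> i \<Longrightarrow> Lie_iter f h j \<in> Gen f h i"
| G_const: "(\<lambda>_. c) \<in> Gen f h i"
| G_add: "\<phi> \<in> Gen f h i \<Longrightarrow> \<psi> \<in> Gen f h i \<Longrightarrow> (\<lambda>x. \<phi> x + \<psi> x) \<in> Gen f h i"
| G_mult: "\<phi> \<in> Gen f h i \<Longrightarrow> \<psi> \<in> Gen f h i \<Longrightarrow> (\<lambda>x. \<phi> x * \<psi> x) \<in> Gen f h i"
| G_comp: "smooth_real \<beta> \<Longrightarrow> \<phi> \<in> Gen f h i \<Longrightarrow> (\<lambda>x. \<beta> (\<phi> x)) \<in> Gen f h i"

lemma Gen_mono: "\<phi> \<in> Gen f h i \<Longrightarrow> i \<le> i' \<Longrightarrow> \<phi> \<in> Gen f h i'"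
  by (induction rule: Gen.induct) (auto intro: Gen.intros)

lemma smooth_deriv: "smooth_real \<beta> \<Longrightarrow> smooth_real (deriv \<beta>)"
  unfolding smooth_real_def by (metis funpow_Suc_right comp_apply)

lemma smooth_has_deriv: "smooth_real \<beta> \<Longrightarrow> (\<beta> has_real_derivative deriv \<beta> x) (at x)"
  unfolding smooth_real_def using DERIV_deriv_iff_real_differentiable
  by (metis funpow_0)

lemma Gen_diff0:
  assumes "\<phi> \<in> Gen f h i" "\<forall>j\<le>i. \<forall>y. Lie_iter f h j differentiable (at y)"
  shows "\<exists>D. (\<phi> has_derivative D) (at x) \<and>
    (\<forall>v. (\<forall>j\<le>i. frechet_derivative (Lie_iter f h j) (at x) v = 0) \<longrightarrow> D v = 0)"
  using assms(1)
proof induction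
  case (G_base j)
  then have "(Lie_iter f h j has_derivative frechet_derivative (Lie_iter f h j) (at x)) (at x)"
    using assms(2) frechet_derivative_works by auto
  then show ?case using G_base by (intro exI[of _ "frechet_derivative (Lie_iter f h j) (at x)"]) auto
next
  case (G_const c)
  then show ?case by (intro exI[of _ "\<lambda>_. 0"]) auto
next
  case (G_add \<phi> \<psi>)
  then obtain D1 D2 where "(\<phi> has_derivative D1) (at x)" "(\<psi> has_derivative D2) (at x)"
    "\<forall>v. (\<forall>j\<le>i. frechet_derivative (Lie_iter f h j) (at x) v = 0) \<longrightarrow> D1 v = 0"
    "\<forall>v. (\<forall>j\<le>i. frechet_derivative (Lie_iter f h j) (at x) v = 0) \<longrightarrow> D2 v = 0" by blast
  then show ?case by (intro exI[of _ "\<lambda>v. D1 v + D2 v"]) (auto intro: has_derivative_add)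
next
  case (G_mult \<phi> \<psi>)
  then obtain D1 D2 where "(\<phi> has_derivative D1) (at x)" "(\<psi> has_derivative D2) (at x)"
    "\<forall>v. (\<forall>j\<le>i. frechet_derivative (Lie_iter f h j) (at x) v = 0) \<longrightarrow> D1 v = 0"
    "\<forall>v. (\<forall>j\<le>i. frechet_derivative (Lie_iter f h j) (at x) v = 0) \<longrightarrow> D2 v = 0" by blast
  then show ?case by (intro exI[of _ "\<lambda>v. \<phi> x * D2 v + D1 v * \<psi> x"]) (auto intro: has_derivative_mult)
next
  case (G_comp \<beta> \<phi>)
  then obtain D1 where d1: "(\<phi> has_derivative D1) (at x)"
    "\<forall>v. (\<forall>j\<le>i. frechet_derivative (Lie_iter f h j) (at x) v = 0) \<longrightarrow> D1 v = 0" by blast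
  have "(\<beta> has_derivative (\<lambda>s. deriv \<beta> (\<phi> x) * s)) (at (\<phi> x))"
    using smooth_has_deriv[OF G_comp(1)] by (simp add: has_field_derivative_def)
  note dc = has_derivative_compose[OF d1(1) this]
  show ?case
  proof (intro exI conjI allI impI)
    show "((\<lambda>x. \<beta> (\<phi> x)) has_derivative (\<lambda>v. deriv \<beta> (\<phi> x) * D1 v)) (at x)" by (rule dc)
    fix v assume "\<forall>j\<le>i. frechet_derivative (Lie_iter f h j) (at x) v = 0"
    then show "deriv \<beta> (\<phi> x) * D1 v = 0" using d1(2) by simp
  qed
qed

lemma Gen_diff:
  assumes "\<phi> \<in> Gen f h i" "\<forall>j\<le>i. \<forall>y. Lie_iter f h j differentiable (at y)"
  shows "(\<phi> has_derivative frechet_derivative \<phi> (at x)) (at x)"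
  using Gen_diff0[OF assms, of x] frechet_derivative_works differentiableI by blast

lemma Gen_zero:
  assumes "\<phi> \<in> Gen f h i" "\<forall>j\<le>i. \<forall>y. Lie_iter f h j differentiable (at y)"
    "\<forall>j\<le>i. frechet_derivative (Lie_iter f h j) (at x) v = 0"
  shows "frechet_derivative \<phi> (at x) v = 0"
  using Gen_diff0[OF assms(1,2), of x] assms(3) frechet_derivative_at by metis

lemma Gen_Lie:
  assumes "\<phi> \<in> Gen f h i" "\<forall>j\<le>i. \<forall>y. Lie_iter f h j differentiable (at y)"
  shows "Lie f \<phi> \<in> Gen f h (Suc i)"
  using assms(1)
proof induction
  case (G_base j)
  then show ?case using Gen.G_base[of "Suc j" "Suc i" f h] by simp
next
  case (G_const c)
  have "Lie f (\<lambda>_. c) = (\<lambda>_. 0)"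
    unfolding Lie_def by (auto simp: frechet_derivative_at[OF has_derivative_const, symmetric])
  then show ?case by (simp add: Gen.G_const)
next
  case (G_add \<phi> \<psi>)
  have "Lie f (\<lambda>x. \<phi> x + \<psi> x) = (\<lambda>x. Lie f \<phi> x + Lie f \<psi> x)"
  proof
    fix x
    have dd: "((\<lambda>x. \<phi> x + \<psi> x) has_derivative (\<lambda>v. frechet_derivative \<phi> (at x) v + frechet_derivative \<psi> (at x) v)) (at x)"
      using Gen_diff[OF G_add.hyps(1) assms(2)] Gen_diff[OF G_add.hyps(2) assms(2)] by (rule has_derivative_add)
    show "Lie f (\<lambda>x. \<phi> x + \<psi> x) x = Lie f \<phi> x + Lie f \<psi> x"
      unfolding Lie_def by (simp add: frechet_derivative_at[OF dd, symmetric])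
  qed
  then show ?case using Gen.G_add[OF G_add.IH(1) G_add.IH(2)] by simp
next
  case (G_mult \<phi> \<psi>)
  have "Lie f (\<lambda>x. \<phi> x * \<psi> x) = (\<lambda>x. \<phi> x * Lie f \<psi> x + Lie f \<phi> x * \<psi> x)"
  proof
    fix x
    have dd: "((\<lambda>x. \<phi> x * \<psi> x) has_derivative (\<lambda>v. \<phi> x * frechet_derivative \<psi> (at x) v + frechet_derivative \<phi> (at x) v * \<psi> x)) (at x)"
      using Gen_diff[OF G_mult.hyps(1) assms(2)] Gen_diff[OF G_mult.hyps(2) assms(2)] by (rule has_derivative_mult)
    show "Lie f (\<lambda>x. \<phi> x * \<psi> x) x = \<phi> x * Lie f \<psi> x + Lie f \<phi> x * \<psi> x"
      unfolding Lie_def by (simp add: frechet_derivative_at[OF dd, symmetric])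
  qed
  moreover have p1: "\<phi> \<in> Gen f h (Suc i)" "\<psi> \<in> Gen f h (Suc i)"
    using G_mult.hyps Gen_mono le_SucI by blast+
  have "(\<lambda>x. \<phi> x * Lie f \<psi> x + Lie f \<phi> x * \<psi> x) \<in> Gen f h (Suc i)"
    by (rule Gen.G_add[OF Gen.G_mult[OF p1(1) G_mult.IH(2)] Gen.G_mult[OF G_mult.IH(1) p1(2)]])
  ultimately show ?case by simp
next
  case (G_comp \<beta> \<phi>)
  have "Lie f (\<lambda>x. \<beta> (\<phi> x)) = (\<lambda>x. deriv \<beta> (\<phi> x) * Lie f \<phi> x)"
  proof
    fix x
    have "(\<beta> has_derivative (\<lambda>s. deriv \<beta> (\<phi> x) * s)) (at (\<phi> x))"
      using smooth_has_deriv[OF G_comp.hyps(1)] by (simp add: has_field_derivative_def)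
    note dd = has_derivative_compose[OF Gen_diff[OF G_comp.hyps(2) assms(2)] this]
    show "Lie f (\<lambda>x. \<beta> (\<phi> x)) x = deriv \<beta> (\<phi> x) * Lie f \<phi> x"
      unfolding Lie_def by (simp add: frechet_derivative_at[OF dd, symmetric])
  qed
  moreover have p1: "\<phi> \<in> Gen f h (Suc i)"
    using G_comp.hyps Gen_mono le_SucI by blast
  have "(\<lambda>x. deriv \<beta> (\<phi> x) * Lie f \<phi> x) \<in> Gen f h (Suc i)"
    by (rule Gen.G_mult[OF Gen.G_comp[OF smooth_deriv[OF G_comp.hyps(1)] p1] G_comp.IH])
  ultimately show ?case by simp
qed

lemma psi_Gen:
  assumes "\<forall>j<r. \<forall>y. Lie_iter f h j differentiable (at y)" "\<forall>i'\<in>{1..r}. smooth_real (\<alpha> i')"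
  shows "i < r \<Longrightarrow> psi f \<alpha> h i \<in> Gen f h i"
proof (induction i)
  case 0
  then show ?case using G_base[of 0 0 f h] by simp
next
  case (Suc i)
  have d: "\<forall>j\<le>i. \<forall>y. Lie_iter f h j differentiable (at y)" using assms(1) Suc by auto
  have pi: "psi f \<alpha> h i \<in> Gen f h i" using Suc.IH Suc.prems by simp
  have l: "Lie f (psi f \<alpha> h i) \<in> Gen f h (Suc i)" by (rule Gen_Lie[OF pi d])
  have sm: "smooth_real (\<alpha> (Suc i))" using assms(2) Suc.prems by auto
  have c: "(\<lambda>x. \<alpha> (Suc i) (psi f \<alpha> h i x)) \<in> Gen f h (Suc i)"
    by (rule G_comp[OF sm Gen_mono[OF pi le_SucI[OF order_refl]]])
  show ?case using G_add[OF l c] by simp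
qed

lemma lin_mv:
  fixes D :: "real^'n \<Rightarrow> real" and M :: "real^'q^'n"
  assumes "linear D"
  shows "D (M *v w) = (\<chi> j. D (column j M)) \<bullet> w"
proof -
  have "D (M *v w) = (\<Sum>j\<in>UNIV. w $ j * D (column j M))"
    by (simp add: matrix_mult_sum scalar_mult_eq_scaleR linear_sum[OF assms] linear_scale[OF assms])
  also have "\<dots> = (\<chi> j. D (column j M)) \<bullet> w"
    by (simp add: inner_vec_def mult.commute)
  finally show ?thesis .
qed

lemma quad_bound:
  fixes a e d :: real
  assumes "e > 0"
  shows "a\<^sup>2 / e - a * d \<ge> - (e * d\<^sup>2 / 4)"
proof -
  have "0 \<le> (a - e * d / 2)\<^sup>2 / e" using assms by simp
  also have "(a - e * d / 2)\<^sup>2 / e = a\<^sup>2 / e - a * d + e * d\<^sup>2 / 4"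
    using assms by (simp add: power2_eq_square field_simps)
  finally show ?thesis by simp
qed

lemma Kinf_inv:
  assumes "Kinf_e a" shows "a (inv a y) = y"
proof -
  have "\<exists>z. a z = y" for y
  proof -
  have c: "continuous_on UNIV a" and top: "filterlim a at_top at_top" and bot: "filterlim a at_bot at_bot"
    using assms unfolding Kinf_e_def by auto
  have "eventually (\<lambda>x. a x \<ge> y) at_top" using top by (simp add: filterlim_at_top)
  then obtain b where b: "a b \<ge> y" by (meson eventually_at_top_linorder order_refl)
  have "eventually (\<lambda>x. a x \<le> y) at_bot" using bot by (simp add: filterlim_at_bot)
  then obtain c0 where c0: "\<forall>x\<le>c0. a x \<le> y" by (meson eventually_at_bot_linorder)
  define l where "l = min c0 b"
  have "a l \<le> y" "l \<le> b" using c0 by (auto simp: l_def)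
  then show "\<exists>z. a z = y"
    using IVT'[of a l y b] b continuous_on_subset[OF c] by blast
  qed
  then have "surj a" unfolding surj_def by metis
  then show ?thesis by (rule surj_f_inv_f)
qed


lemma comparison:
  fixes y y' :: "real \<Rightarrow> real"
  assumes J: "is_interval J" "0 \<in> J" "J \<subseteq> {0..}"
    and d: "\<forall>t\<in>J. (y has_real_derivative y' t) (at t within J)"
    and y0: "y 0 \<ge> 0" and pos: "\<forall>t\<in>J. y t < 0 \<longrightarrow> y' t \<ge> 0"
  shows "\<forall>t\<in>J. y t \<ge> 0"
proof (rule ccontr)
  assume "\<not> ?thesis"
  then obtain t1 where t1: "t1 \<in> J" "y t1 < 0" by auto
  have iv: "\<And>a b s. a \<in> J \<Longrightarrow> b \<in> J \<Longrightarrow> a \<le> s \<Longrightarrow> s \<le> b \<Longrightarrow> s \<in> J"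
    using J(1) unfolding is_interval_1 by blast
  have sub: "{0..t1} \<subseteq> J" using iv[OF J(2) t1(1)] by auto
  have cont: "continuous_on J y"
    using d DERIV_continuous continuous_on_eq_continuous_within by blast
  hence cont1: "continuous_on {0..t1} y" using sub continuous_on_subset by blast
  define S where "S = {0..t1} \<inter> y -` {0..}"
  have "closed S" unfolding S_def by (rule continuous_closed_preimage[OF cont1]) auto
  moreover have "bounded S" unfolding S_def by (rule bounded_subset[of "{0..t1}"]) auto
  ultimately have "compact S" by (simp add: compact_eq_bounded_closed)
  moreover have "0 \<in> S" using y0 t1 J unfolding S_def by auto
  ultimately obtain t0 where t0: "t0 \<in> S" "\<forall>s\<in>S. s \<le> t0"
    using compact_attains_sup by blast
  have t0le: "0 \<le> t0" "t0 \<le> t1" "y t0 \<ge> 0" using t0 unfolding S_def by auto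
  have neg: "y s < 0" if "t0 < s" "s \<le> t1" for s
  proof (rule ccontr)
    assume "\<not> y s < 0"
    then have "s \<in> S" using that t0le unfolding S_def by auto
    then show False using t0(2) that by force
  qed
  have "y t0 \<le> y t1"
  proof (rule DERIV_nonneg_imp_increasing_open[of t0 t1 y])
    show "t0 \<le> t1" by (rule t0le)
    show "continuous_on {t0..t1} y" using cont1 continuous_on_subset t0le by fastforce
    fix s assume s: "t0 < s" "s < t1"
    have "{t0<..<t1} \<subseteq> J" using sub t0le by auto
    then have "{t0<..<t1} \<subseteq> interior J" by (rule interior_maximal) auto
    then have sJ: "s \<in> interior J" using s by auto
    then have sJ': "s \<in> J" using interior_subset by blast
    have "(y has_real_derivative y' s) (at s)"
      using d sJ' at_within_interior[OF sJ] by metis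
    moreover have "y' s \<ge> 0" using pos sJ' neg s by auto
    ultimately show "\<exists>z. (y has_real_derivative z) (at s) \<and> 0 \<le> z" by blast
  qed
  then show False using t0le t1 by linarith
qed

theorem theorem2:
  fixes f :: "real^'n \<Rightarrow> real^'n" and F :: "real^'n \<Rightarrow> real^'p^'n" and g :: "real^'n \<Rightarrow> real^'m^'n"
    and \<theta> :: "real^'p"
    and \<tau> :: "real^'p \<Rightarrow> real \<Rightarrow> real^'p"
    and V :: "real^'p \<Rightarrow> real \<Rightarrow> real"
    and DV :: "(real^'p) \<times> real \<Rightarrow> ((real^'p) \<times> real) \<Rightarrow>\<^sub>L real"
    and \<eta>1 \<eta>2 \<eta>3 T :: real
    and h :: "real^'n \<Rightarrow> real" and r :: nat and D :: "(real^'n) set"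
    and \<alpha> :: "nat \<Rightarrow> real \<Rightarrow> real" and \<epsilon> :: real
    and k :: "real^'n \<Rightarrow> real^'p \<Rightarrow> real^'m"
    and \<delta> :: real
    and \<theta>h :: "real \<Rightarrow> real^'p"
  assumes sys: "loc_lip f" "loc_lip F" "loc_lip g" "f 0 = 0" "F 0 = 0"
    and tau_lip: "local_lipschitz {0..} UNIV (\<lambda>t a. \<tau> a t)"
    and tau_pw: "\<And>a. pw_continuous (\<tau> a)"
    and V_C1: "\<And>z. z \<in> UNIV \<times> {0..} \<Longrightarrow>
                 ((\<lambda>(a, t). V a t) has_derivative blinfun_apply (DV z)) (at z within UNIV \<times> {0..})"
    and DV_cont: "continuous_on (UNIV \<times> {0..}) DV"
    and V_nonneg: "\<And>a t. t \<ge> 0 \<Longrightarrow> V a t \<ge> 0"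
    and eta: "\<eta>1 > 0" "\<eta>2 > 0" "\<eta>3 > 0" "T \<ge> 0"
    and V_bounds: "\<And>a t. t \<ge> 0 \<Longrightarrow> \<eta>1 * (norm a)\<^sup>2 \<le> V a t \<and> V a t \<le> \<eta>2 * (norm a)\<^sup>2"
    and Vdot_nonpos: "\<And>a t. t \<ge> 0 \<Longrightarrow> blinfun_apply (DV (a, t)) (- \<tau> (\<theta> - a) t, 1) \<le> 0"
    and Vdot_neg: "\<And>a t. t \<ge> T \<Longrightarrow>
                     blinfun_apply (DV (a, t)) (- \<tau> (\<theta> - a) t, 1) \<le> - \<eta>3 * (norm a)\<^sup>2"
    and domain: "open D" "connected D" "D \<noteq> {}"
    and reldeg_u: "rel_deg f g h r D"
    and reldeg_theta: "rel_deg f F h r D"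
    and alpha_smooth: "\<And>i. i \<in> {1..r} \<Longrightarrow> smooth_real (\<alpha> i)"
    and psi_diff: "\<And>i x. i < r \<Longrightarrow> psi f \<alpha> h i differentiable (at x)"
    and cbf: "ISSf_HOCBF f F g h r \<alpha> \<epsilon>"
    and k_lip: "loc_lip (\<lambda>(x, a). k x a)"
    and k_in: "\<And>x a. k x a \<in> K_h f F g h r \<alpha> \<epsilon> x a"
    and update: "\<And>t. t \<ge> 0 \<Longrightarrow> ((\<lambda>s. \<tau> (\<theta>h s) s) has_integral (\<theta>h t - \<theta>h 0)) {0..t}"
    and delta: "\<delta> \<ge> 0" "\<And>t. t \<ge> 0 \<Longrightarrow> norm (\<theta> - \<theta>h t) \<le> \<delta>"
  shows "\<forall>(x :: real \<Rightarrow> real^'n) (J :: real set).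
           is_interval J \<and> 0 \<in> J \<and> J \<subseteq> {0..}
           \<and> (\<forall>t\<in>J. (x has_vector_derivative
                  (f (x t) + F (x t) *v \<theta>h t + g (x t) *v k (x t) (\<theta>h t) + F (x t) *v (\<theta> - \<theta>h t)))
                  (at t within J))
           \<and> x 0 \<in> C_delta f \<alpha> h \<epsilon> r \<delta>
           \<longrightarrow> (\<forall>t\<in>J. x t \<in> C_delta f \<alpha> h \<epsilon> r \<delta>)"
proof (intro allI impI, elim conjE)
  fix x :: "real \<Rightarrow> real^'n" and J :: "real set"
  assume J: "is_interval J" "0 \<in> J" "J \<subseteq> {0..}"
    and xd: "\<forall>t\<in>J. (x has_vector_derivative
                  (f (x t) + F (x t) *v \<theta>h t + g (x t) *v k (x t) (\<theta>h t) + F (x t) *v (\<theta> - \<theta>h t)))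
                  (at t within J)"
    and x0: "x 0 \<in> C_delta f \<alpha> h \<epsilon> r \<delta>"
  have r1: "1 \<le> r" and Ld: "\<forall>j<r. \<forall>y. Lie_iter f h j differentiable (at y)"
    and Ag: "\<forall>j. j + 2 \<le> r \<longrightarrow> (\<forall>y. LieV g (Lie_iter f h j) y = 0)"
    using reldeg_u unfolding rel_deg_def by auto
  have AF: "\<forall>j. j + 2 \<le> r \<longrightarrow> (\<forall>y. LieV F (Lie_iter f h j) y = 0)"
    using reldeg_theta unfolding rel_deg_def by auto
  have Kinf: "\<forall>i\<in>{1..r}. Kinf_e (\<alpha> i)" and eps: "\<epsilon> > 0"
    using cbf unfolding ISSf_HOCBF_def by auto
  have sm: "\<forall>i\<in>{1..r}. smooth_real (\<alpha> i)" using alpha_smooth by auto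
  have psiG: "psi f \<alpha> h i \<in> Gen f h i" if "i < r" for i
    using psi_Gen[OF Ld sm that] .
  have smono: "strict_mono (\<alpha> i)" if "1 \<le> i" "i \<le> r" for i
    using Kinf that unfolding Kinf_e_def by auto

  have LV0: "LieV g (psi f \<alpha> h i) y = 0 \<and> LieV F (psi f \<alpha> h i) y = 0" if i: "i + 2 \<le> r" for i y
  proof -
    have Ldi: "\<forall>j\<le>i. \<forall>y. Lie_iter f h j differentiable (at y)" using Ld i by auto
    have G: "psi f \<alpha> h i \<in> Gen f h i" using psiG i by auto
    have zg: "frechet_derivative (psi f \<alpha> h i) (at y) (column j (g y)) = 0" for j
    proof (rule Gen_zero[OF G Ldi], intro allI impI)
      fix j' assume "j' \<le> i"
      then have "LieV g (Lie_iter f h j') y = 0" using Ag i by auto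
      then have "(LieV g (Lie_iter f h j') y) $ j = 0" by simp
      then show "frechet_derivative (Lie_iter f h j') (at y) (column j (g y)) = 0"
        by (simp add: LieV_def)
    qed
    have zF: "frechet_derivative (psi f \<alpha> h i) (at y) (column j (F y)) = 0" for j
    proof (rule Gen_zero[OF G Ldi], intro allI impI)
      fix j' assume "j' \<le> i"
      then have "LieV F (Lie_iter f h j') y = 0" using AF i by auto
      then have "(LieV F (Lie_iter f h j') y) $ j = 0" by simp
      then show "frechet_derivative (Lie_iter f h j') (at y) (column j (F y)) = 0"
        by (simp add: LieV_def)
    qed
    show ?thesis using zg zF by (simp add: LieV_def vec_eq_iff)
  qed

  have dpsi: "((\<lambda>s. psi f \<alpha> h i (x s)) has_real_derivative
      (Lie f (psi f \<alpha> h i) (x t) + LieV F (psi f \<alpha> h i) (x t) \<bullet> \<theta>h t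
       + LieV g (psi f \<alpha> h i) (x t) \<bullet> k (x t) (\<theta>h t) + LieV F (psi f \<alpha> h i) (x t) \<bullet> (\<theta> - \<theta>h t)))
      (at t within J)" if i: "i < r" and t: "t \<in> J" for i t
  proof -
    let ?D = "frechet_derivative (psi f \<alpha> h i) (at (x t))"
    have hd: "(psi f \<alpha> h i has_derivative ?D) (at (x t))"
      using psi_diff[OF i] frechet_derivative_works by blast
    have lin: "linear ?D" using has_derivative_linear[OF hd] .
    have vd: "((psi f \<alpha> h i) \<circ> x has_vector_derivative
        ?D (f (x t) + F (x t) *v \<theta>h t + g (x t) *v k (x t) (\<theta>h t) + F (x t) *v (\<theta> - \<theta>h t))) (at t within J)"
      by (rule vector_derivative_diff_chain_within[OF xd[rule_format, OF t] has_derivative_at_withinI[OF hd]])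
    have eq: "?D (f (x t) + F (x t) *v \<theta>h t + g (x t) *v k (x t) (\<theta>h t) + F (x t) *v (\<theta> - \<theta>h t))
       = Lie f (psi f \<alpha> h i) (x t) + LieV F (psi f \<alpha> h i) (x t) \<bullet> \<theta>h t
       + LieV g (psi f \<alpha> h i) (x t) \<bullet> k (x t) (\<theta>h t) + LieV F (psi f \<alpha> h i) (x t) \<bullet> (\<theta> - \<theta>h t)"
      by (simp add: linear_add[OF lin] lin_mv[OF lin] Lie_def LieV_def)
    show ?thesis using vd unfolding eq
      by (simp add: has_real_derivative_iff_has_vector_derivative comp_def)
  qed

  have gr: "\<alpha> r (- gamma \<alpha> \<epsilon> r \<delta> r) = - (\<epsilon> * \<delta>\<^sup>2 / 4)"
    using Kinf r1 by (simp add: gamma_def Kinf_inv)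
  have gi: "\<alpha> i (- gamma \<alpha> \<epsilon> r \<delta> i) = - gamma \<alpha> \<epsilon> r \<delta> (Suc i)" if i: "1 \<le> i" "i < r" for i
  proof -
    have e: "r - i = Suc (r - Suc i)" and e2: "r - Suc (r - Suc i) = i" using i by auto
    have "gamma \<alpha> \<epsilon> r \<delta> i = - inv (\<alpha> i) (- gamma \<alpha> \<epsilon> r \<delta> (Suc i))"
      unfolding gamma_def e gamma_aux.simps e2 by simp
    then show ?thesis using Kinf i by (simp add: Kinf_inv)
  qed
  have x0i: "psi f \<alpha> h (i - 1) (x 0) + gamma \<alpha> \<epsilon> r \<delta> i \<ge> 0" if "1 \<le> i" "i \<le> r" for i
    using x0 that unfolding C_delta_def by auto

  have top: "\<forall>t\<in>J. psi f \<alpha> h (r - 1) (x t) + gamma \<alpha> \<epsilon> r \<delta> r \<ge> 0"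
  proof (rule comparison[OF J])
    let ?E = "\<lambda>t. Lie f (psi f \<alpha> h (r - 1)) (x t) + LieV F (psi f \<alpha> h (r - 1)) (x t) \<bullet> \<theta>h t
       + LieV g (psi f \<alpha> h (r - 1)) (x t) \<bullet> k (x t) (\<theta>h t) + LieV F (psi f \<alpha> h (r - 1)) (x t) \<bullet> (\<theta> - \<theta>h t)"
    show "\<forall>t\<in>J. ((\<lambda>s. psi f \<alpha> h (r - 1) (x s) + gamma \<alpha> \<epsilon> r \<delta> r) has_real_derivative ?E t) (at t within J)"
      using DERIV_add[OF dpsi DERIV_const] r1 by fastforce
    show "0 \<le> psi f \<alpha> h (r - 1) (x 0) + gamma \<alpha> \<epsilon> r \<delta> r" using x0i[of r] r1 by auto
    show "\<forall>t\<in>J. psi f \<alpha> h (r - 1) (x t) + gamma \<alpha> \<epsilon> r \<delta> r < 0 \<longrightarrow> 0 \<le> ?E t"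
    proof (intro ballI impI)
      fix t assume t: "t \<in> J" and neg: "psi f \<alpha> h (r - 1) (x t) + gamma \<alpha> \<epsilon> r \<delta> r < 0"
      define LF where "LF = LieV F (psi f \<alpha> h (r - 1)) (x t)"
      have kin: "Lie f (psi f \<alpha> h (r - 1)) (x t) + LF \<bullet> \<theta>h t + LieV g (psi f \<alpha> h (r - 1)) (x t) \<bullet> k (x t) (\<theta>h t)
          \<ge> - \<alpha> r (psi f \<alpha> h (r - 1) (x t)) + (norm LF)\<^sup>2 / \<epsilon>"
        using k_in[of "x t" "\<theta>h t"] unfolding K_h_def LF_def by simp
      have tpos: "t \<ge> 0" using t J by auto
      have "\<bar>LF \<bullet> (\<theta> - \<theta>h t)\<bar> \<le> norm LF * norm (\<theta> - \<theta>h t)" by (rule Cauchy_Schwarz_ineq2)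
      also have "\<dots> \<le> norm LF * \<delta>" using delta(2)[OF tpos] by (simp add: mult_left_mono)
      finally have ip: "LF \<bullet> (\<theta> - \<theta>h t) \<ge> - (norm LF * \<delta>)" by linarith
      have q: "(norm LF)\<^sup>2 / \<epsilon> - norm LF * \<delta> \<ge> - (\<epsilon> * \<delta>\<^sup>2 / 4)" by (rule quad_bound[OF eps])
      have "\<alpha> r (psi f \<alpha> h (r - 1) (x t)) < \<alpha> r (- gamma \<alpha> \<epsilon> r \<delta> r)"
        using strict_mono_less[OF smono[OF r1 order_refl]] neg by simp
      then have "\<alpha> r (psi f \<alpha> h (r - 1) (x t)) < - (\<epsilon> * \<delta>\<^sup>2 / 4)" using gr by simp
      then show "0 \<le> ?E t" using kin ip q unfolding LF_def by linarith
    qed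
  qed

  have stepL: "\<forall>t\<in>J. psi f \<alpha> h i (x t) + gamma \<alpha> \<epsilon> r \<delta> (Suc i) \<ge> 0"
    if i: "i + 1 < r" and IH: "\<forall>t\<in>J. psi f \<alpha> h (Suc i) (x t) + gamma \<alpha> \<epsilon> r \<delta> (Suc (Suc i)) \<ge> 0" for i
  proof (rule comparison[OF J])
    let ?E = "\<lambda>t. psi f \<alpha> h (Suc i) (x t) - \<alpha> (Suc i) (psi f \<alpha> h i (x t))"
    show "\<forall>t\<in>J. ((\<lambda>s. psi f \<alpha> h i (x s) + gamma \<alpha> \<epsilon> r \<delta> (Suc i)) has_real_derivative ?E t) (at t within J)"
    proof
      fix t assume t: "t \<in> J"
      have "i < r" "i + 2 \<le> r" using i by auto
      from DERIV_add[OF dpsi[OF this(1) t] DERIV_const[of "gamma \<alpha> \<epsilon> r \<delta> (Suc i)"]] LV0[OF this(2), of "x t"]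
      show "((\<lambda>s. psi f \<alpha> h i (x s) + gamma \<alpha> \<epsilon> r \<delta> (Suc i)) has_real_derivative ?E t) (at t within J)"
        by simp
    qed
    show "0 \<le> psi f \<alpha> h i (x 0) + gamma \<alpha> \<epsilon> r \<delta> (Suc i)" using x0i[of "Suc i"] i by auto
    show "\<forall>t\<in>J. psi f \<alpha> h i (x t) + gamma \<alpha> \<epsilon> r \<delta> (Suc i) < 0 \<longrightarrow> 0 \<le> ?E t"
    proof (intro ballI impI)
      fix t assume t: "t \<in> J" and neg: "psi f \<alpha> h i (x t) + gamma \<alpha> \<epsilon> r \<delta> (Suc i) < 0"
      have "\<alpha> (Suc i) (psi f \<alpha> h i (x t)) < \<alpha> (Suc i) (- gamma \<alpha> \<epsilon> r \<delta> (Suc i))"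
        using strict_mono_less[OF smono[of "Suc i"]] neg i by simp
      then have "\<alpha> (Suc i) (psi f \<alpha> h i (x t)) < - gamma \<alpha> \<epsilon> r \<delta> (Suc (Suc i))"
        using gi[of "Suc i"] i by simp
      then show "0 \<le> ?E t" using IH t by fastforce
    qed
  qed

  have all: "\<forall>t\<in>J. psi f \<alpha> h i (x t) + gamma \<alpha> \<epsilon> r \<delta> (Suc i) \<ge> 0" if "i \<le> r - 1" for i
    using that
  proof (induction rule: inc_induct)
    case base
    then show ?case using top r1 by simp
  next
    case (step n)
    then show ?case using stepL[of n] by simp
  qed
  show "\<forall>t\<in>J. x t \<in> C_delta f \<alpha> h \<epsilon> r \<delta>"
  proof
    fix t assume t: "t \<in> J"
    have "psi f \<alpha> h (i - 1) (x t) + gamma \<alpha> \<epsilon> r \<delta> i \<ge> 0" if "i \<in> {1..r}" for i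
      using all[of "i - 1"] that t by auto
    then show "x t \<in> C_delta f \<alpha> h \<epsilon> r \<delta>" unfolding C_delta_def by auto
  qed
qed

end
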